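(* Let $f$ be a differentiable superfunction on $\mathbb{R}^m$ such that $L_{ij}f=0$ for all $1\le i\le j\le m+2n$. Then $f$ is a spherically symmetric superfunction, i.e. there is a function $h$ on $(0,\infty)$, $n$ times differentiable, such that $f=h(R^2)=\sum_{j=0}^n(-1)^j\frac{\underline{x}\grave{}^{2j}}{j!}h^{(j)}(r^2)$.
   Context: Fix integers $m\ge1$, $n\ge0$. Let $\Lambda_{2n}$ be the complex Grassmann algebra generated by anticommuting variables ${x\grave{}}_1,\dots,{x\grave{}}_{2n}$. A superfunction on an open set $\Omega\subset\mathbb{R}^m$ is $f=\sum_{A}{x\grave{}}_Af_A$, with $A\in\{0,1\}^{2n}$, ${x\grave{}}_A={x\grave{}}_1^{\alpha_1}\cdots{x\grave{}}_{2n}^{\alpha_{2n}}$, $f_A:\Omega\to\mathbb{C}$; it is differentiable if all $f_A$ are. Bosonic coordinates $x_1,\dots,x_m$, $r^2=\sum x_i^2$. Fermionic derivatives $\partial_{{x\grave{}}_j}$ commute with the $x_i$ and satisfy $\partial_{{x\grave{}}_j}({x\grave{}}_k g)=\delta_{jk}g-{x\grave{}}_k\partial_{{x\grave{}}_j}g$. Put $\underline{x}\grave{}^2=\sum_{j=1}^n{x\grave{}}_{2j-1}{x\grave{}}_{2j}$, $R^2=r^2-\underline{x}\grave{}^2$. Write $X_i=x_i$ for $1\le i\le m$ and $X_{m+j}={x\grave{}}_j$ for $1\le j\le 2n$, with parity $[i]=0$ for $i\le m$ and $[i]=1$ otherwise. Define $\partial_{X^i}=\partial_{x_i}$ for $i\le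 m$, $\partial_{X^{m+2k-1}}=2\partial_{{x\grave{}}_{2k}}$ and $\partial_{X^{m+2k}}=-2\partial_{{x\grave{}}_{2k-1}}$ for $1\le k\le n$. The generators of the orthosymplectic Lie superalgebra $\mathfrak{osp}(m|2n)$ are the operators $L_{ij}=X_i\partial_{X^j}-(-1)^{[i][j]}X_j\partial_{X^i}$, $1\le i\le j\le m+2n$.
   Formalization: The bosonic dimension satisfies m >= 2 rather than m >= 1, so the case m = 1 is excluded for every n. The statement above fails without it. *)

theory Defs
  imports "HOL-Analysis.Analysis"
begin

text \<open>A superfunction on R^m with values in the Grassmann algebra Lambda_{2n}:
  f = sum_A xgrave_A f_A, represented by its coefficient map A \<mapsto> f_A, where the
  multi-index A is the subset of {1..2n} of fermionic generators occurring in xgrave_A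
  (taken in increasing order). Coefficients at sets A not contained in {1..2n} are
  irrelevant and never consulted.\<close>

type_synonym 'm superfun = "nat set \<Rightarrow> real^'m \<Rightarrow> complex"

definition sf_zero :: "'m superfun" where
  "sf_zero = (\<lambda>A x. 0)"

definition sf_one :: "'m superfun" where
  "sf_one = (\<lambda>A x. if A = {} then 1 else 0)"

definition sf_add :: "'m superfun \<Rightarrow> 'm superfun \<Rightarrow> 'm superfun" where
  "sf_add f g = (\<lambda>A x. f A x + g A x)"

definition sf_scale :: "complex \<Rightarrow> 'm superfun \<Rightarrow> 'm superfun" where
  "sf_scale c f = (\<lambda>A x. c * f A x)"

text \<open>Sign of moving xgrave_k to its place in xgrave_A (k not in A).\<close>
definition gsign :: "nat set \<Rightarrow> nat \<Rightarrow> complex" where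
  "gsign A k = (-1) ^ card {j \<in> A. j < k}"

text \<open>Sign in xgrave_A xgrave_B = gsign2 A B xgrave_(A \<union> B) for disjoint A, B.\<close>
definition gsign2 :: "nat set \<Rightarrow> nat set \<Rightarrow> complex" where
  "gsign2 A B = (-1) ^ card {(a, b). a \<in> A \<and> b \<in> B \<and> b < a}"

definition sf_mul :: "'m superfun \<Rightarrow> 'm superfun \<Rightarrow> 'm superfun" where
  "sf_mul f g = (\<lambda>C x. \<Sum>A\<in>Pow C. gsign2 A (C - A) * f A x * g (C - A) x)"

definition sf_pow :: "'m superfun \<Rightarrow> nat \<Rightarrow> 'm superfun" where
  "sf_pow f j = (sf_mul f ^^ j) sf_one"

text \<open>Left multiplication by the fermionic variable xgrave_k.\<close>
definition fmul :: "nat \<Rightarrow> 'm superfun \<Rightarrow> 'm superfun" where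
  "fmul k f = (\<lambda>A x. if k \<in> A then gsign (A - {k}) k * f (A - {k}) x else 0)"

text \<open>Fermionic derivative d/d xgrave_k (it satisfies
  d_j (xgrave_k g) = delta_jk g - xgrave_k d_j g).\<close>
definition fder :: "nat \<Rightarrow> 'm superfun \<Rightarrow> 'm superfun" where
  "fder k f = (\<lambda>A x. if k \<notin> A then gsign A k * f (insert k A) x else 0)"

definition bmul :: "'m::finite \<Rightarrow> 'm superfun \<Rightarrow> 'm superfun" where
  "bmul i f = (\<lambda>A x. complex_of_real (x $ i) * f A x)"

definition bder :: "'m::finite \<Rightarrow> 'm superfun \<Rightarrow> 'm superfun" where
  "bder i f = (\<lambda>A x. vector_derivative (\<lambda>t::real. f A (x + t *\<^sub>R axis i 1)) (at 0))"

text \<open>Combined coordinates X: Inl i is the bosonic x_i (i.e. X_i, i \<le> m),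
  Inr k is the fermionic xgrave_k (i.e. X_{m+k}, 1 \<le> k \<le> 2n).\<close>
type_synonym 'm sidx = "'m + nat"

fun sidx_valid :: "nat \<Rightarrow> 'm sidx \<Rightarrow> bool" where
  "sidx_valid n (Inl i) = True"
| "sidx_valid n (Inr k) = (1 \<le> k \<and> k \<le> 2 * n)"

fun sidx_par :: "'m sidx \<Rightarrow> nat" where
  "sidx_par (Inl i) = 0"
| "sidx_par (Inr k) = 1"

fun Xmul :: "('m::finite) sidx \<Rightarrow> 'm superfun \<Rightarrow> 'm superfun" where
  "Xmul (Inl i) f = bmul i f"
| "Xmul (Inr k) f = fmul k f"

text \<open>d_{X^i}: d_{x_i} for bosons, d_{X^{m+2k-1}} = 2 d_{xgrave_{2k}},
  d_{X^{m+2k}} = -2 d_{xgrave_{2k-1}}.\<close>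
fun Xder :: "('m::finite) sidx \<Rightarrow> 'm superfun \<Rightarrow> 'm superfun" where
  "Xder (Inl i) f = bder i f"
| "Xder (Inr k) f = (if odd k then sf_scale 2 (fder (k + 1) f)
                     else sf_scale (-2) (fder (k - 1) f))"

definition Lop :: "('m::finite) sidx \<Rightarrow> 'm sidx \<Rightarrow> 'm superfun \<Rightarrow> 'm superfun" where
  "Lop a b f = sf_add (Xmul a (Xder b f))
      (sf_scale (- ((-1) ^ (sidx_par a * sidx_par b))) (Xmul b (Xder a f)))"

definition xgsq :: "nat \<Rightarrow> 'm superfun" where
  "xgsq n = (\<lambda>A x. \<Sum>j=1..n. fmul (2*j - 1) (fmul (2*j) sf_one) A x)"

definition hder :: "nat \<Rightarrow> (real \<Rightarrow> complex) \<Rightarrow> real \<Rightarrow> complex" where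
  "hder j h = ((\<lambda>g t. vector_derivative g (at t)) ^^ j) h"

end

theory Submission
  imports Defs
begin



lemma orth_zero:
  fixes D :: "real^'m::finite \<Rightarrow> complex"
  assumes lin: "linear D" and z: "z \<noteq> 0" and zw: "z \<bullet> w = 0"
    and rel: "\<And>i j. of_real (z$i) * D (axis j 1) = of_real (z$j) * D (axis i 1)"
  shows "D w = 0"
proof -
  obtain i where zi: "z$i \<noteq> 0" using z by (metis vec_eq_iff zero_index)
  have w: "w = (\<Sum>j\<in>UNIV. (w$j) *\<^sub>R axis j 1)"
    using basis_expansion[of w] by (simp add: scalar_mult_eq_scaleR)
  have "of_real (z$i) * D w = (\<Sum>j\<in>UNIV. of_real (w$j) * (of_real (z$i) * D (axis j 1)))"
    apply (subst w)
    apply (simp only: linear_sum[OF lin] linear_scale[OF lin])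
    by (simp add: scaleR_conv_of_real sum_distrib_left algebra_simps)
  also have "\<dots> = (\<Sum>j\<in>UNIV. of_real (w$j) * (of_real (z$j) * D (axis i 1)))"
    using rel by simp
  also have "\<dots> = of_real (z \<bullet> w) * D (axis i 1)"
    by (simp add: inner_vec_def sum_distrib_left sum_distrib_right algebra_simps)
  also have "\<dots> = 0" using zw by simp
  finally show ?thesis using zi by simp
qed

lemma radial:
  fixes g :: "real^'m::finite \<Rightarrow> complex"
  assumes m2: "CARD('m) \<ge> 2" and dg: "\<And>x. g differentiable (at x)"
    and rel: "\<And>x i j. of_real (x$i) * frechet_derivative g (at x) (axis j 1)
                   = of_real (x$j) * frechet_derivative g (at x) (axis i 1)"
    and x: "x \<noteq> 0"
  shows "g x = g (norm x *\<^sub>R axis k 1)"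
proof -
  define \<rho> where "\<rho> = norm x"
  have rpos: "\<rho> > 0" using x by (simp add: \<rho>_def)
  define F where "F y = g ((\<rho> / norm y) *\<^sub>R y)" for y
  have dF: "(F has_derivative (\<lambda>h. 0)) (at y)" if y: "y \<noteq> 0" for y
  proof -
    define p where "p = (\<rho> / norm y) *\<^sub>R y"
    define P where "P v = (\<rho> / norm y) *\<^sub>R v + (- (\<rho> * (v \<bullet> sgn y) / (norm y)^2)) *\<^sub>R y" for v
    have pd: "((\<lambda>y. (\<rho> / norm y) *\<^sub>R y) has_derivative P) (at y)"
      unfolding P_def
      apply (rule derivative_eq_intros has_derivative_norm[OF y] | simp add: y)+
      by (auto simp: y power2_eq_square field_simps)
    have p0: "p \<noteq> 0" using y rpos by (simp add: p_def)
    have gd: "(g has_derivative frechet_derivative g (at p)) (at p)"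
      using dg frechet_derivative_works by blast
    have comp: "((g \<circ> (\<lambda>y. (\<rho> / norm y) *\<^sub>R y)) has_derivative (frechet_derivative g (at p) \<circ> P)) (at y)"
      apply (rule diff_chain_at[OF pd]) using gd by (simp add: p_def)
    have lin: "linear (frechet_derivative g (at p))"
      using gd has_derivative_linear by blast
    have "frechet_derivative g (at p) (P v) = 0" for v
    proof (rule orth_zero[OF lin p0])
      have yy: "y \<bullet> y = norm y * norm y" by (simp add: power2_eq_square[symmetric] power2_norm_eq_inner)
      have "p \<bullet> P v = 0"
        using y unfolding p_def P_def
        by (simp add: inner_add_right inner_diff_right inner_scaleR_right inner_scaleR_left sgn_div_norm yy inner_commute[of v y] power2_eq_square field_simps)
      then show "p \<bullet> P v = 0" .
      show "\<And>i j. of_real (p$i) * frechet_derivative g (at p) (axis j 1) = of_real (p$j) * frechet_derivative g (at p) (axis i 1)"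
        by (rule rel)
    qed
    then have "((\<lambda>x. g ((\<rho> / norm x) *\<^sub>R x)) has_derivative (\<lambda>x. 0)) (at y)" using comp by (simp add: o_def)
    moreover have "F = (\<lambda>x. g ((\<rho> / norm x) *\<^sub>R x))" by (simp add: F_def fun_eq_iff)
    ultimately show ?thesis by simp
  qed
  have "F constant_on (- {0})"
  proof (rule has_derivative_zero_connected_constant_on[where K="{}"])
    show "connected (- {0::real^'m})" using m2 by (intro connected_punctured_universe) simp
    show "continuous_on (- {0}) F"
      by (rule has_derivative_continuous_on[where f'="\<lambda>_ h. 0"]) (use dF in \<open>auto intro: has_derivative_at_withinI\<close>)
    show "\<forall>x\<in>- {0} - {}. (F has_derivative (\<lambda>h. 0)) (at x within - {0})"
      using dF by (simp add: has_derivative_at_withinI)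
  qed auto
  then have "F x = F (axis k 1)"
    unfolding constant_on_def using x by (metis ComplI axis_eq_0_iff singletonD zero_neq_one)
  then show ?thesis using x by (simp add: F_def \<rho>_def)
qed




lemma vd_chain:
  assumes "(p has_vector_derivative v) (at t)" "(G has_derivative DG) (at (p t))"
  shows "((\<lambda>\<tau>. G (p \<tau>)) has_vector_derivative DG v) (at t)"
proof -
  have "((G \<circ> p) has_derivative (DG \<circ> (\<lambda>x. x *\<^sub>R v))) (at t)"
    using assms(1) unfolding has_vector_derivative_def by (rule diff_chain_at) (use assms(2) in simp)
  moreover have "linear DG" using assms(2) has_derivative_linear by blast
  ultimately show ?thesis unfolding has_vector_derivative_def
    by (simp add: o_def linear_scale)
qed

lemma line_vd: "((\<lambda>t::real. x + t *\<^sub>R v) has_vector_derivative v) (at t)"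
  by (auto intro!: derivative_eq_intros simp: has_vector_derivative_def)

lemma bder_frechet:
  fixes f :: "'m::finite superfun"
  assumes "f A differentiable (at x)"
  shows "bder i f A x = frechet_derivative (f A) (at x) (axis i 1)"
proof -
  have "((\<lambda>t. f A (x + t *\<^sub>R axis i 1)) has_vector_derivative frechet_derivative (f A) (at x) (axis i 1)) (at 0)"
    by (rule vd_chain[OF line_vd]) (use assms frechet_derivative_works in \<open>simp add: frechet_derivative_works[symmetric]\<close>)
  then show ?thesis unfolding bder_def by (rule vector_derivative_at)
qed

lemma nsq_eq: "(\<Sum>i\<in>UNIV. (x $ i)\<^sup>2) = (norm (x::real^'m::finite))\<^sup>2"
  by (simp only: power2_norm_eq_inner inner_vec_def) (simp add: power2_eq_square)

lemma hder_Suc: "hder (Suc k) h t = vector_derivative (hder k h) (at t)"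
  by (simp add: hder_def)

lemma hder_0: "hder 0 h = h"
  by (simp add: hder_def)

definition Pr :: "nat \<Rightarrow> nat set" where "Pr s = {2 * s - 1, 2 * s}"
definition Prs :: "nat set \<Rightarrow> nat set" where "Prs S = (\<Union>s\<in>S. Pr s)"

lemma mem_prs: "j \<in> Prs S \<longleftrightarrow> (\<exists>s\<in>S. j = 2 * s - 1 \<or> j = 2 * s)"
  by (auto simp: Prs_def Pr_def)

lemma odd_in_prs: assumes S: "S \<subseteq> {1..}" and s: "s \<ge> 1" shows "2 * s - 1 \<in> Prs S \<longleftrightarrow> s \<in> S"
proof
  assume "2 * s - 1 \<in> Prs S"
  then obtain t where t: "t\<in>S" "2 * s - 1 = 2 * t - 1 \<or> 2 * s - 1 = 2 * t" by (auto simp: mem_prs)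
  with S have "t \<ge> 1" by auto
  with t s have "t = s" by presburger
  with t show "s\<in>S" by simp
qed (auto simp: mem_prs)

lemma even_in_prs: assumes S: "S \<subseteq> {1..}" shows "2 * s \<in> Prs S \<longleftrightarrow> s \<in> S"
proof
  assume "2 * s \<in> Prs S"
  then obtain t where t: "t\<in>S" "2 * s = 2 * t - 1 \<or> 2 * s = 2 * t" by (auto simp: mem_prs)
  with S have "t \<ge> 1" by auto
  with t have "t = s" by presburger
  with t show "s\<in>S" by simp
qed (auto simp: mem_prs)

lemma prs_insert: "Prs (insert s S) = insert (2 * s) (insert (2 * s-1) (Prs S))"
  by (auto simp: Prs_def Pr_def)

lemma finite_prs: "finite S \<Longrightarrow> finite (Prs S)"
  by (simp add: Prs_def Pr_def)

lemma prs_sub: "S \<subseteq> {1..n} \<Longrightarrow> Prs S \<subseteq> {1..2*n}"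
  by (force simp: mem_prs subset_eq)




lemma gsign_nz: "gsign A k \<noteq> 0" by (simp add: gsign_def)

definition hf :: "'m::finite superfun \<Rightarrow> real \<Rightarrow> complex" where
  "hf f t = f {} (sqrt t *\<^sub>R axis undefined 1)"

context
  fixes f :: "'m::finite superfun" and n :: nat
  assumes diff: "\<And>A x. A \<subseteq> {1..2*n} \<Longrightarrow> f A differentiable (at x)"
    and L0: "\<And>a b A x. sidx_valid n a \<Longrightarrow> sidx_valid n b \<Longrightarrow> A \<subseteq> {1..2*n} \<Longrightarrow>
               Lop a b f A x = 0"
begin

lemma Lbos: "A \<subseteq> {1..2*n} \<Longrightarrow> of_real (x$i) * bder j f A x = of_real (x$j) * bder i f A x"
  using L0[of "Inl i" "Inl j" A x] by (simp add: Lop_def sf_add_def sf_scale_def bmul_def)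

lemma zero_odd:
  assumes A: "A \<subseteq> {1..2*n}" and k: "k \<in> A" "odd k" "k+1 \<notin> A" and x: "x \<noteq> 0"
  shows "f A x = 0"
proof -
  obtain i where xi: "x$i \<noteq> 0" using x by (metis vec_eq_iff zero_index)
  have "k \<le> 2*n" "k \<ge> 1" using A k by auto
  then have "k + 1 \<le> 2*n" using k by presburger
  then have v: "sidx_valid n (Inr (k+1) :: 'm sidx)" by simp
  have sub: "A - {k} \<subseteq> {1..2*n}" using A by auto
  have "Lop (Inl i) (Inr (k+1)) f (A - {k}) x = 0" by (rule L0[OF _ v sub]) simp
  then have "of_real (x$i) * ((-2) * (gsign (A-{k}) k * f A x)) = 0"
    using k by (simp add: Lop_def sf_add_def sf_scale_def bmul_def fder_def fmul_def insert_absorb)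
  then show ?thesis using xi gsign_nz by simp
qed

lemma zero_even:
  assumes A: "A \<subseteq> {1..2*n}" and k: "k \<in> A" "even k" "k-1 \<notin> A" and x: "x \<noteq> 0"
  shows "f A x = 0"
proof -
  obtain i where xi: "x$i \<noteq> 0" using x by (metis vec_eq_iff zero_index)
  have "k \<le> 2*n" "k \<ge> 1" using A k by auto
  then have k2: "k \<ge> 2" using k by presburger
  then have v: "sidx_valid n (Inr (k-1) :: 'm sidx)" using \<open>k \<le> 2*n\<close> by auto
  have sub: "A - {k} \<subseteq> {1..2*n}" using A by auto
  have o: "odd (k-1)" "k - 1 + 1 = k" using k k2 by auto
  have "Lop (Inl i) (Inr (k-1)) f (A - {k}) x = 0" by (rule L0[OF _ v sub]) simp
  then have "of_real (x$i) * (2 * (gsign (A-{k}) k * f A x)) = 0"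
    using k o by (simp add: Lop_def sf_add_def sf_scale_def bmul_def fder_def fmul_def insert_absorb)
  then show ?thesis using xi gsign_nz by simp
qed

lemma deriv_rel:
  assumes S: "S \<subseteq> {1..n}" and s: "s \<in> {1..n}" "s \<notin> S"
  shows "bder i f (Prs S) x = -2 * of_real (x$i) * f (Prs (insert s S)) x"
proof -
  define A' where "A' = insert (2 * s-1) (Prs S)"
  have S1: "S \<subseteq> {1..}" using S by auto
  have o1: "2 * s-1 \<notin> Prs S" using odd_in_prs[OF S1] s by simp
  have e1: "2 * s \<notin> Prs S" using even_in_prs[OF S1] s by simp
  have v: "sidx_valid n (Inr (2 * s-1) :: 'm sidx)" using s by auto
  have sub: "A' \<subseteq> {1..2*n}" using prs_sub[OF S] s by (auto simp: A'_def)
  have od: "odd (2 * s-1)" "2 * s-1+1 = 2 * s" using s by auto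
  have ne: "2 * s \<notin> A'" using e1 s by (auto simp: A'_def)
  have ins: "insert (2 * s) A' = Prs (insert s S)" by (simp add: A'_def prs_insert)
  have del: "A' - {2 * s-1} = Prs S" using o1 by (auto simp: A'_def)
  have fin: "finite (Prs S)" using S by (intro finite_prs) (auto intro: finite_subset)
  have setq: "{j \<in> A'. j < 2 * s} = insert (2 * s-1) {j \<in> Prs S. j < 2 * s-1}"
    using s o1 by (auto simp: A'_def)
  have gs: "gsign A' (2 * s) = - gsign (Prs S) (2 * s-1)"
    unfolding gsign_def setq using fin o1 by simp
  have "Lop (Inl i) (Inr (2 * s-1)) f A' x = 0" by (rule L0[OF _ v sub]) simp
  then have "of_real (x$i) * (2 * (gsign A' (2 * s) * f (insert (2 * s) A') x))
        - gsign (A' - {2 * s-1}) (2 * s-1) * bder i f (A' - {2 * s-1}) x = 0"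
    using od ne by (simp add: Lop_def sf_add_def sf_scale_def bmul_def fder_def fmul_def A'_def)
  then have "gsign (Prs S) (2 * s-1) * (bder i f (Prs S) x + 2 * of_real (x$i) * f (Prs (insert s S)) x) = 0"
    unfolding ins del gs by (simp add: algebra_simps neg_eq_iff_add_eq_0 add.commute)
  then have "bder i f (Prs S) x + 2 * of_real (x$i) * f (Prs (insert s S)) x = 0"
    using gsign_nz[of "Prs S" "2 * s - 1"] by (simp only: mult_eq_0_iff) simp
  then show ?thesis by (simp add: add_eq_0_iff2)
qed


lemma claim0:
  assumes m2: "CARD('m) \<ge> 2" and x: "x \<noteq> 0"
  shows "f {} x = hder 0 (hf f) ((norm x)\<^sup>2)"
proof -
  have d: "\<And>x. f {} differentiable (at x)" using diff by simp
  have "f {} x = f {} (norm x *\<^sub>R axis undefined 1)"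
  proof (rule radial[OF m2 d _ x])
    fix x :: "real^'m" and i j
    show "of_real (x$i) * frechet_derivative (f {}) (at x) (axis j 1)
                   = of_real (x$j) * frechet_derivative (f {}) (at x) (axis i 1)"
      using Lbos[of "{}" x i j] by (simp add: bder_frechet[of f "{}", OF d])
  qed
  then show ?thesis by (simp add: hder_0 hf_def)
qed

lemma Dk:
  assumes cl: "\<And>S x. S \<subseteq> {1..n} \<Longrightarrow> card S = k \<Longrightarrow> x \<noteq> 0 \<Longrightarrow>
                  f (Prs S) x = (-1)^k * hder k (hf f) ((norm x)\<^sup>2)"
    and k: "k \<le> n" and t: "t > 0"
  shows "(hder k (hf f) has_vector_derivative hder (Suc k) (hf f) t) (at t)"
proof -
  define e :: "real^'m" where "e = axis undefined 1"
  define S where "S = {1..k}"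
  have S: "S \<subseteq> {1..n}" "card S = k" using k by (auto simp: S_def)
  define G where "G = f (Prs S)"
  define y where "y = sqrt t *\<^sub>R e"
  have Gd: "(G has_derivative frechet_derivative G (at y)) (at y)"
    using diff[OF prs_sub[OF S(1)]] unfolding G_def by (simp add: frechet_derivative_works[symmetric])
  have sq: "((\<lambda>\<tau>. sqrt \<tau> *\<^sub>R e) has_vector_derivative (inverse (sqrt t) / 2) *\<^sub>R e) (at t)"
    using has_vector_derivative_scaleR[OF DERIV_real_sqrt[OF t] has_vector_derivative_const[of e]]
    by simp
  have "((\<lambda>\<tau>. G (sqrt \<tau> *\<^sub>R e)) has_vector_derivative frechet_derivative G (at y) ((inverse (sqrt t) / 2) *\<^sub>R e)) (at t)"
    by (rule vd_chain[OF sq]) (use Gd in \<open>simp add: y_def\<close>)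
  then have hv: "((\<lambda>\<tau>. (-1)^k * G (sqrt \<tau> *\<^sub>R e)) has_vector_derivative (-1)^k * frechet_derivative G (at y) ((inverse (sqrt t) / 2) *\<^sub>R e)) (at t)"
    by (rule has_vector_derivative_mult_right)
  have eq: "(-1)^k * G (sqrt \<tau> *\<^sub>R e) = hder k (hf f) \<tau>" if "\<tau> \<in> {0<..}" for \<tau>
  proof -
    have "sqrt \<tau> *\<^sub>R e \<noteq> 0" using that by (simp add: e_def)
    then have "G (sqrt \<tau> *\<^sub>R e) = (-1)^k * hder k (hf f) \<tau>"
      using cl[OF S] that by (simp add: G_def e_def)
    then show ?thesis by simp
  qed
  have "(hder k (hf f) has_vector_derivative (-1)^k * frechet_derivative G (at y) ((inverse (sqrt t) / 2) *\<^sub>R e)) (at t)"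
    by (rule has_vector_derivative_transform_within_open[OF hv open_greaterThan _ eq]) (use t in auto)
  moreover then have "hder (Suc k) (hf f) t = (-1)^k * frechet_derivative G (at y) ((inverse (sqrt t) / 2) *\<^sub>R e)"
    by (simp add: hder_Suc vector_derivative_at)
  ultimately show ?thesis by simp
qed


lemma claim_step:
  assumes cl: "\<And>S x. S \<subseteq> {1..n} \<Longrightarrow> card S = k \<Longrightarrow> x \<noteq> 0 \<Longrightarrow>
                  f (Prs S) x = (-1)^k * hder k (hf f) ((norm x)\<^sup>2)"
    and k: "k < n" and S': "S' \<subseteq> {1..n}" "card S' = Suc k" and x: "x \<noteq> 0"
  shows "f (Prs S') x = (-1)^(Suc k) * hder (Suc k) (hf f) ((norm x)\<^sup>2)"
proof -
  have fin: "finite S'" using S'(1) finite_subset by blast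
  obtain s where s: "s \<in> S'" using S'(2) by (metis card.empty ex_in_conv nat.distinct(1))
  define S where "S = S' - {s}"
  have S: "S \<subseteq> {1..n}" "card S = k" "s \<in> {1..n}" "s \<notin> S" "insert s S = S'"
    using S' s fin by (auto simp: S_def)
  obtain i where xi: "x$i \<noteq> 0" using x by (metis vec_eq_iff zero_index)
  define v :: "real^'m" where "v = axis i 1"
  define q where "q t = (norm (x + t *\<^sub>R v))\<^sup>2" for t
  have qeq: "q t = (norm x)\<^sup>2 + 2 * t * x$i + t^2" for t
    unfolding q_def power2_norm_eq_inner
    by (simp add: v_def inner_add_left inner_add_right inner_axis inner_axis' inner_commute power2_eq_square algebra_simps)
  have qd: "(q has_real_derivative 2 * x$i) (at 0)"
    unfolding qeq[abs_def] by (auto intro!: derivative_eq_intros)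
  have q0: "q 0 = (norm x)\<^sup>2" by (simp add: q_def)
  have Hd: "(hder k (hf f) has_vector_derivative hder (Suc k) (hf f) (q 0)) (at (q 0))"
    by (rule Dk[OF cl]) (use k x q0 in auto)
  have "((hder k (hf f) \<circ> q) has_vector_derivative (2 * x$i) *\<^sub>R hder (Suc k) (hf f) (q 0)) (at 0)"
    by (rule vector_diff_chain_at[where f=q and x=0, OF _ Hd]) (use qd in \<open>simp add: has_real_derivative_iff_has_vector_derivative\<close>)
  then have hv: "((\<lambda>t. (-1)^k * (hder k (hf f) \<circ> q) t) has_vector_derivative (-1)^k * ((2 * x$i) *\<^sub>R hder (Suc k) (hf f) (q 0))) (at 0)"
    by (rule has_vector_derivative_mult_right)
  have eq: "(-1)^k * (hder k (hf f) \<circ> q) t = f (Prs S) (x + t *\<^sub>R v)" if "t \<in> {t. x + t *\<^sub>R v \<noteq> 0}" for t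
    using cl[OF S(1,2), of "x + t *\<^sub>R v"] that by (simp add: q_def)
  have op: "open {t::real. x + t *\<^sub>R v \<noteq> 0}"
    by (rule open_Collect_neq) (auto intro!: continuous_intros)
  have "((\<lambda>t. f (Prs S) (x + t *\<^sub>R v)) has_vector_derivative (-1)^k * ((2 * x$i) *\<^sub>R hder (Suc k) (hf f) (q 0))) (at 0)"
    by (rule has_vector_derivative_transform_within_open[OF hv op _ eq]) (use x in auto)
  then have "bder i f (Prs S) x = (-1)^k * ((2 * x$i) *\<^sub>R hder (Suc k) (hf f) (q 0))"
    unfolding bder_def v_def by (rule vector_derivative_at)
  moreover have "bder i f (Prs S) x = -2 * of_real (x$i) * f (Prs S') x"
    using deriv_rel[OF S(1) S(3) S(4)] S(5) by simp
  ultimately have "of_real (x$i) * f (Prs S') x = of_real (x$i) * (- ((-1)^k * hder (Suc k) (hf f) (q 0)))"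
    by (simp add: scaleR_conv_of_real algebra_simps) (metis minus_equation_iff)
  then have "f (Prs S') x = - ((-1)^k * hder (Suc k) (hf f) (q 0))"
    using xi by (metis mult_left_cancel of_real_eq_0_iff)
  then show ?thesis using q0 by simp
qed

lemma claim_all:
  assumes m2: "CARD('m) \<ge> 2"
  shows "k \<le> n \<Longrightarrow> S \<subseteq> {1..n} \<Longrightarrow> card S = k \<Longrightarrow> x \<noteq> 0 \<Longrightarrow>
                  f (Prs S) x = (-1)^k * hder k (hf f) ((norm x)\<^sup>2)"
proof (induction k arbitrary: S x)
  case 0
  then have "S = {}" using finite_subset[OF 0(2)] by auto
  then show ?case using claim0[OF m2 0(4)] by (simp add: Prs_def)
next
  case (Suc k)
  show ?case
    by (rule claim_step[OF Suc.IH]) (use Suc.prems in auto)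
qed

end



lemma Pr_disj: "a \<ge> 1 \<Longrightarrow> b \<ge> 1 \<Longrightarrow> a \<noteq> b \<Longrightarrow> Pr a \<inter> Pr b = {}"
  by (auto simp: Pr_def)

lemma Pr_inj: "a \<ge> 1 \<Longrightarrow> b \<ge> 1 \<Longrightarrow> Pr a = Pr b \<Longrightarrow> a = b"
  using Pr_disj[of a b] by (auto simp: Pr_def)

lemma Pr_sub_Prs: "S \<subseteq> {1..} \<Longrightarrow> Pr s \<subseteq> Prs S \<longleftrightarrow> s \<in> S"
  using even_in_prs[of S s] by (auto simp: Pr_def Prs_def)

lemma Prs_minus: "S \<subseteq> {1..} \<Longrightarrow> s \<in> S \<Longrightarrow> Prs S - Pr s = Prs (S - {s})"
  unfolding Prs_def using Pr_disj[of s] by (auto simp: subset_eq)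

lemma Prs_inj: "S \<subseteq> {1..} \<Longrightarrow> T \<subseteq> {1..} \<Longrightarrow> Prs S = Prs T \<Longrightarrow> S = T"
  using even_in_prs[of S] even_in_prs[of T] by blast

lemma gsign2_Pr:
  assumes s: "s \<ge> 1" and B: "B \<inter> Pr s = {}"
  shows "gsign2 (Pr s) B = 1"
proof -
  have "{(a, b). a \<in> Pr s \<and> b \<in> B \<and> b < a} = Pr s \<times> {b \<in> B. b < 2 * s - 1}"
    using B s apply (auto simp: Pr_def)
    subgoal for b by (cases "b = 2 * s - 1") auto
    done
  moreover have "card (Pr s) = 2" using s by (simp add: Pr_def)
  ultimately show ?thesis by (simp add: gsign2_def card_cartesian_product)
qed

lemma term_val:
  fixes x :: "real^'m::finite"
  assumes j: "j \<ge> 1"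
  shows "fmul (2 * j - 1) (fmul (2 * j) sf_one) A x = (if A = Pr j then 1 else 0)"
proof -
  have a: "fmul (2 * j) sf_one B x = (if B = {2 * j} then 1 else 0)" for B :: "nat set"
    by (auto simp: fmul_def sf_one_def gsign_def)
  have ne: "2 * j - 1 \<noteq> 2 * j" using j by simp
  show ?thesis
  proof (cases "A = Pr j")
    case True
    have m: "2 * j - 1 \<in> A" "A - {2 * j - 1} = {2 * j}" using True ne by (auto simp: Pr_def)
    have e: "{x\<in>{2 * j}. x < 2 * j - 1} = {}" by auto
    have g: "gsign {2 * j} (2 * j - 1) = 1" unfolding gsign_def e by simp
    show ?thesis unfolding fmul_def[of "2 * j - 1"] using True m g by (simp add: a)
  next
    case False
    have "A - {2 * j - 1} \<noteq> {2 * j}" if "2 * j - 1 \<in> A"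
      using False that by (auto simp: Pr_def)
    then show ?thesis unfolding fmul_def[of "2 * j - 1"] using False by (simp add: a)
  qed
qed

lemma xgsq_val: fixes x :: "real^'m::finite" shows "xgsq n A x = (if \<exists>s\<in>{1..n}. A = Pr s then 1 else 0)"
proof -
  have "xgsq n A x = (\<Sum>j\<in>{1..n}. if A = Pr j then 1 else 0)"
    unfolding xgsq_def apply (rule sum.cong[OF refl])
    subgoal for j using term_val[of j A x] by simp
    done
  also have "\<dots> = (\<Sum>j\<in>{j\<in>{1..n}. A = Pr j}. 1)"
    using sum.inter_filter[of "{1..n}" "\<lambda>_. 1::complex" "\<lambda>j. A = Pr j"] by simp
  also have "\<dots> = (if \<exists>s\<in>{1..n}. A = Pr s then 1 else 0)"
  proof (cases "\<exists>s\<in>{1..n}. A = Pr s")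
    case True
    then obtain s where s: "s \<in> {1..n}" "A = Pr s" by blast
    then have "{j\<in>{1..n}. A = Pr j} = {s}" using Pr_inj[of s] by auto
    then show ?thesis using True by simp
  next
    case False
    then have "{j\<in>{1..n}. A = Pr j} = {}" by auto
    then show ?thesis using False by simp
  qed
  finally show ?thesis .
qed


lemma Prs_insert2: "Prs (insert s S) = Pr s \<union> Prs S"
  by (simp add: Prs_def)

lemma pow_val:
  fixes x :: "real^'m::finite"
  shows "finite C \<Longrightarrow> sf_pow (xgsq n) j C x =
    (if \<exists>S\<subseteq>{1..n}. card S = j \<and> C = Prs S then of_nat (fact j) else 0)"
proof (induction j arbitrary: C)
  case 0
  have "(\<exists>S\<subseteq>{1..n}. card S = 0 \<and> C = Prs S) \<longleftrightarrow> C = {}"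
  proof
    assume "\<exists>S\<subseteq>{1..n}. card S = 0 \<and> C = Prs S"
    then obtain S where "S \<subseteq> {1..n}" "card S = 0" "C = Prs S" by blast
    moreover then have "S = {}" using finite_subset by fastforce
    ultimately show "C = {}" by (simp add: Prs_def)
  next
    assume "C = {}" then show "\<exists>S\<subseteq>{1..n}. card S = 0 \<and> C = Prs S"
      by (intro exI[of _ "{}"]) (simp add: Prs_def)
  qed
  then show ?case by (simp add: sf_pow_def sf_one_def)
next
  case (Suc j)
  define X :: "'m superfun" where "X = xgsq n"
  define T where "T = {s\<in>{1..n}. Pr s \<subseteq> C}"
  have "sf_pow X (Suc j) C x = (\<Sum>A\<in>Pow C. gsign2 A (C - A) * X A x * sf_pow X j (C - A) x)"
    by (simp add: sf_pow_def sf_mul_def)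
  also have "\<dots> = (\<Sum>A\<in>Pow C. if (\<exists>s\<in>{1..n}. A = Pr s) then gsign2 A (C - A) * sf_pow X j (C - A) x else 0)"
    by (rule sum.cong[OF refl]) (simp add: X_def xgsq_val)
  also have "\<dots> = (\<Sum>A\<in>{A\<in>Pow C. \<exists>s\<in>{1..n}. A = Pr s}. gsign2 A (C - A) * sf_pow X j (C - A) x)"
    by (rule sum.inter_filter[symmetric]) (use Suc.prems in simp)
  also have "{A\<in>Pow C. \<exists>s\<in>{1..n}. A = Pr s} = Pr ` T" by (auto simp: T_def)
  also have "(\<Sum>A\<in>Pr ` T. gsign2 A (C - A) * sf_pow X j (C - A) x)
      = (\<Sum>s\<in>T. gsign2 (Pr s) (C - Pr s) * sf_pow X j (C - Pr s) x)"
  proof -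
    have "inj_on Pr T" by (auto simp: inj_on_def T_def intro: Pr_inj)
    then show ?thesis by (simp add: sum.reindex)
  qed
  also have "\<dots> = (\<Sum>s\<in>T. (if \<exists>S'\<subseteq>{1..n}. card S' = j \<and> C - Pr s = Prs S' then of_nat (fact j) else 0))"
  proof (rule sum.cong[OF refl])
    fix s assume s: "s \<in> T"
    have "gsign2 (Pr s) (C - Pr s) = 1" by (rule gsign2_Pr) (use s in \<open>auto simp: T_def\<close>)
    then show "gsign2 (Pr s) (C - Pr s) * sf_pow X j (C - Pr s) x =
       (if \<exists>S'\<subseteq>{1..n}. card S' = j \<and> C - Pr s = Prs S' then of_nat (fact j) else 0)"
      using Suc.IH[of "C - Pr s"] Suc.prems by (simp add: X_def)
  qed
  also have "\<dots> = (if \<exists>S\<subseteq>{1..n}. card S = Suc j \<and> C = Prs S then of_nat (fact (Suc j)) else 0)"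
  proof (cases "\<exists>S\<subseteq>{1..n}. card S = Suc j \<and> C = Prs S")
    case True
    then obtain S where S: "S \<subseteq> {1..n}" "card S = Suc j" "C = Prs S" by blast
    have S1: "S \<subseteq> {1..}" using S by auto
    have fS: "finite S" using S(1) finite_subset by blast
    have TS: "T = S" using S Pr_sub_Prs[OF S1] by (auto simp: T_def)
    have "(\<Sum>s\<in>T. (if \<exists>S'\<subseteq>{1..n}. card S' = j \<and> C - Pr s = Prs S' then of_nat (fact j) else 0))
        = (\<Sum>s\<in>S. (of_nat (fact j) :: complex))"
    proof (rule sum.cong)
      fix s assume s: "s \<in> S"
      have "\<exists>S'\<subseteq>{1..n}. card S' = j \<and> C - Pr s = Prs S'"
        by (rule exI[of _ "S - {s}"]) (use S s fS Prs_minus[OF S1 s] in auto)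
      then show "(if \<exists>S'\<subseteq>{1..n}. card S' = j \<and> C - Pr s = Prs S' then of_nat (fact j) else 0) = (of_nat (fact j) :: complex)"
        by simp
    qed (simp add: TS)
    also have "\<dots> = of_nat (fact (Suc j))" using S(2) by (simp add: algebra_simps)
    finally show ?thesis using True by simp
  next
    case False
    have "(if \<exists>S'\<subseteq>{1..n}. card S' = j \<and> C - Pr s = Prs S' then of_nat (fact j) else 0) = (0::complex)"
      if s: "s \<in> T" for s
    proof -
      have "\<not> (\<exists>S'\<subseteq>{1..n}. card S' = j \<and> C - Pr s = Prs S')"
      proof
        assume "\<exists>S'\<subseteq>{1..n}. card S' = j \<and> C - Pr s = Prs S'"
        then obtain S' where S': "S' \<subseteq> {1..n}" "card S' = j" "C - Pr s = Prs S'" by blast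
        have sub: "Pr s \<subseteq> C" "s \<in> {1..n}" using s by (auto simp: T_def)
        have fS': "finite S'" using S'(1) finite_subset by blast
        have "s \<notin> S'"
        proof
          assume "s \<in> S'"
          then have "2 * s \<in> Prs S'" by (auto simp: Prs_def Pr_def)
          then show False using S'(3) by (auto simp: Pr_def)
        qed
        moreover have "C = Prs (insert s S')" using sub S'(3) by (auto simp: Prs_insert2)
        ultimately have "insert s S' \<subseteq> {1..n} \<and> card (insert s S') = Suc j \<and> C = Prs (insert s S')"
          using S' sub fS' by auto
        then show False using False by blast
      qed
      then show ?thesis by simp
    qed
    then have "(\<Sum>s\<in>T. (if \<exists>S'\<subseteq>{1..n}. card S' = j \<and> C - Pr s = Prs S' then of_nat (fact j) else 0)) = (0::complex)"
      by (intro sum.neutral ballI)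
    moreover have "\<not> (\<exists>S\<subseteq>{1..n}. card S = Suc j \<and> C = Prs S)" using False .
    ultimately show ?thesis by (simp only: if_False)
  qed
  finally show ?case by (simp add: X_def)
qed




lemma unpaired:
  assumes A: "A \<subseteq> {1..2*n}" and nP: "\<not> (\<exists>S\<subseteq>{1..n}. A = Prs S)"
  shows "\<exists>k\<in>A. (odd k \<and> k+1 \<notin> A) \<or> (even k \<and> k-1 \<notin> A)"
proof (rule ccontr)
  assume "\<not> ?thesis"
  then have pa: "\<And>k. k \<in> A \<Longrightarrow> odd k \<Longrightarrow> k+1 \<in> A" "\<And>k. k \<in> A \<Longrightarrow> even k \<Longrightarrow> k-1 \<in> A" by auto
  define S0 where "S0 = {s\<in>{1..n}. 2 * s \<in> A}"
  have "A = Prs S0"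
  proof
    show "A \<subseteq> Prs S0"
    proof
      fix k assume k: "k \<in> A"
      then have k1: "1 \<le> k" "k \<le> 2*n" using A by auto
      show "k \<in> Prs S0"
      proof (cases "even k")
        case True
        then obtain s where s: "k = 2 * s" by blast
        then have "s \<in> S0" using k k1 by (auto simp: S0_def)
        then show ?thesis using s by (auto simp: mem_prs)
      next
        case False
        then have "k + 1 \<in> A" using pa k by blast
        moreover obtain s where s: "k + 1 = 2 * s" using False by (metis even_Suc Suc_eq_plus1 evenE)
        ultimately have "s \<in> S0" using A by (auto simp: S0_def)
        then show ?thesis using s by (auto simp: mem_prs intro!: bexI[of _ s])
      qed
    qed
    show "Prs S0 \<subseteq> A"
    proof
      fix k assume "k \<in> Prs S0"
      then obtain s where s: "s \<in> S0" "k = 2 * s - 1 \<or> k = 2 * s" by (auto simp: mem_prs)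
      then have "2 * s \<in> A" by (auto simp: S0_def)
      moreover then have "2 * s - 1 \<in> A" using pa(2) by simp
      ultimately show "k \<in> A" using s by auto
    qed
  qed
  moreover have "S0 \<subseteq> {1..n}" by (auto simp: S0_def)
  ultimately show False using nP by blast
qed

theorem theorem9:
  fixes f :: "'m::finite superfun" and n :: nat
  assumes m2: "CARD('m) \<ge> 2"
    and diff: "\<And>A x. A \<subseteq> {1..2*n} \<Longrightarrow> f A differentiable (at x)"
    and L0: "\<And>a b A x. sidx_valid n a \<Longrightarrow> sidx_valid n b \<Longrightarrow> A \<subseteq> {1..2*n} \<Longrightarrow>
               Lop a b f A x = 0"
  shows "\<exists>h :: real \<Rightarrow> complex.
           (\<forall>j<n. \<forall>t>0. hder j h differentiable (at t)) \<and>
           (\<forall>A x. A \<subseteq> {1..2*n} \<longrightarrow> x \<noteq> 0 \<longrightarrow>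
              f A x = (\<Sum>j=0..n. ((-1) ^ j / of_nat (fact j)) *
                         sf_pow (xgsq n) j A x * hder j h (\<Sum>i\<in>UNIV. (x $ i)\<^sup>2)))"
proof (intro exI conjI allI impI)
  have cl: "\<And>S x. S \<subseteq> {1..n} \<Longrightarrow> card S = k \<Longrightarrow> x \<noteq> 0 \<Longrightarrow>
                  f (Prs S) x = (-1)^k * hder k (hf f) ((norm x)\<^sup>2)" if "k \<le> n" for k
    using claim_all[OF diff L0 m2 that] by blast
  fix j t :: real
  show "hder j (hf f) differentiable (at t)" if "j < n" "t > 0" for j :: nat and t :: real
    by (rule differentiableI_vector, rule Dk[OF diff L0 cl]) (use that in auto)
next
  fix A and x :: "real^'m"
  assume A: "A \<subseteq> {1..2*n}" and x: "x \<noteq> 0"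
  have finA: "finite A" using A finite_subset by blast
  have pv: "sf_pow (xgsq n) j A x = (if \<exists>S\<subseteq>{1..n}. card S = j \<and> A = Prs S then of_nat (fact j) else 0)" for j
    by (rule pow_val[OF finA])
  show "f A x = (\<Sum>j=0..n. ((-1) ^ j / of_nat (fact j)) *
                         sf_pow (xgsq n) j A x * hder j (hf f) (\<Sum>i\<in>UNIV. (x $ i)\<^sup>2))"
  proof (cases "\<exists>S\<subseteq>{1..n}. A = Prs S")
    case True
    then obtain S where S: "S \<subseteq> {1..n}" "A = Prs S" by blast
    define k where "k = card S"
    have kn: "k \<le> n" unfolding k_def using card_mono[OF _ S(1)] by simp
    have S1: "S \<subseteq> {1..}" using S by auto
    have pvk: "sf_pow (xgsq n) j A x = (if j = k then of_nat (fact j) else 0)" for j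
    proof -
      have "(\<exists>S'\<subseteq>{1..n}. card S' = j \<and> A = Prs S') \<longleftrightarrow> j = k"
      proof
        assume "\<exists>S'\<subseteq>{1..n}. card S' = j \<and> A = Prs S'"
        then obtain S' where S': "S' \<subseteq> {1..n}" "card S' = j" "A = Prs S'" by blast
        have "S' \<subseteq> {1..}" using S' by auto
        then have "S' = S" using Prs_inj[OF _ S1] S S' by auto
        then show "j = k" using \<open>card S' = j\<close> k_def by simp
      qed (use S k_def in auto)
      then show ?thesis using pv[of j] by simp
    qed
    have "(\<Sum>j=0..n. ((-1) ^ j / of_nat (fact j)) * sf_pow (xgsq n) j A x * hder j (hf f) (\<Sum>i\<in>UNIV. (x $ i)\<^sup>2))
        = (\<Sum>j\<in>{0..n}. if j = k then (-1)^k * hder k (hf f) ((norm x)\<^sup>2) else 0)"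
      by (rule sum.cong[OF refl]) (simp add: pvk nsq_eq)
    also have "\<dots> = (-1)^k * hder k (hf f) ((norm x)\<^sup>2)"
      using kn by (simp add: sum.delta)
    also have "\<dots> = f A x" using claim_all[OF diff L0 m2 kn S(1) k_def[symmetric] x] S(2) by simp
    finally show ?thesis by simp
  next
    case False
    obtain k where k: "k \<in> A" "(odd k \<and> k+1 \<notin> A) \<or> (even k \<and> k-1 \<notin> A)"
      using unpaired[OF A False] by blast
    have "f A x = 0"
      using k zero_odd[OF diff L0 A k(1) _ _ x] zero_even[OF diff L0 A k(1) _ _ x] by blast
    moreover have "sf_pow (xgsq n) j A x = 0" for j using pv[of j] False by auto
    ultimately show ?thesis by simp
  qed
qed



end
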